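(* Let $S$ be a convex real analytic surface in $\mathbb{R}^3$ whose oriented normal lines are given, near the normal direction $\xi=0$, by $\xi\mapsto(\xi,F(\xi,\bar\xi))$ with $F=\sum_{n,m\ge 0}A_{nm}\xi^n\bar\xi^m$ a convergent power series satisfying $\partial\big(F/(1+\xi\bar\xi)^2\big)=\bar\partial\big(\bar F/(1+\xi\bar\xi)^2\big)$. Suppose $\xi=0$ is an isolated umbilic point which is non-degenerate of order $N\ge2$, with $A_{N1}\neq0$, write $N=2l+1$ or $N=2l+2$, and let \[ P_N(\zeta)=\sum_{n=0}^N (N-n+1)\frac{A_{n\,N-n+1}}{A_{N1}}\zeta^n=\prod_{n=1}^N(\zeta-\zeta_n). \] Define $\Delta_k^N$ by $\binom{N}{k}\Delta_k^N=\sum_{1\le i_1<\dots<i_k\le N}\zeta_{i_1}\cdots\zeta_{i_k}$ (so that $P_N(\zeta)=\sum_{k=0}^N\binom{N}{k}\Delta_k^N\zeta^{N-k}$). Then \[ |\Delta_{N-2}^N|=1\qquad\text{and}\qquad \Delta_n^N=\Delta_{N-2}^N\,\overline{\Delta_{N-2-n}^N}\quad\text{for } 1\le n\le l-1. \]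
   Context: Notation: $\partial=\partial/\partial\xi$, $\bar\partial=\partial/\partial\bar\xi$. The space of oriented lines in $\mathbb{R}^3=\mathbb{C}\oplus\mathbb{R}$ is identified with $TS^2$: $(\xi,\eta)$, with $\xi$ the stereographic coordinate (projection from the south pole) of the direction and $\eta$ representing the tangent vector $\eta\partial_\xi+\bar\eta\partial_{\bar\xi}$, corresponds to the line $z=\frac{2(\eta-\bar\eta\xi^2)+2\xi(1+\xi\bar\xi)r}{(1+\xi\bar\xi)^2}$, $t=\frac{-2(\eta\bar\xi+\bar\eta\xi)+(1-\xi^2\bar\xi^2)r}{(1+\xi\bar\xi)^2}$, $r\in\mathbb{R}$, where $z=x^1+ix^2$, $t=x^3$. A point of $S$ whose oriented normal has direction $\xi$ is umbilic iff $\bar\partial F(\xi)=0$. With $\xi=Re^{i\theta}$ write $\bar\partial F=\sum_{k\ge0}G_k(\theta)e^{-ik\theta}R^k$, so $G_k(\theta)=\sum_{n=0}^k(k-n+1)A_{n\,k-n+1}e^{2in\theta}$. The isolated umbilic point $\xi=0$ is non-degenerate of order $N$ if $G_k\equiv0$ for $k<N$ and $G_N(\theta)\neq 0$ for all $\theta$. *)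

theory Defs
  imports "HOL-Analysis.Analysis" "HOL-Computational_Algebra.Polynomial"
begin

definition wirt_d :: "(complex \<Rightarrow> complex) \<Rightarrow> complex \<Rightarrow> complex" where
  "wirt_d f z = (frechet_derivative f (at z) 1 - \<i> * frechet_derivative f (at z) \<i>) / 2"

definition wirt_dbar :: "(complex \<Rightarrow> complex) \<Rightarrow> complex \<Rightarrow> complex" where
  "wirt_dbar f z = (frechet_derivative f (at z) 1 + \<i> * frechet_derivative f (at z) \<i>) / 2"

definition power_series_rep :: "(nat \<Rightarrow> nat \<Rightarrow> complex) \<Rightarrow> (complex \<Rightarrow> complex) \<Rightarrow> real \<Rightarrow> bool" where
  "power_series_rep A F \<rho> \<longleftrightarrow> 0 < \<rho> \<and>
     (\<forall>\<xi>\<in>ball 0 \<rho>. ((\<lambda>(n, m). A n m * \<xi> ^ n * cnj \<xi> ^ m) has_sum F \<xi>) UNIV)"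

definition reality_condition :: "(complex \<Rightarrow> complex) \<Rightarrow> real \<Rightarrow> bool" where
  "reality_condition F \<rho> \<longleftrightarrow>
     (\<forall>\<xi>\<in>ball 0 \<rho>.
        wirt_d (\<lambda>z. F z / (1 + z * cnj z)^2) \<xi> =
        wirt_dbar (\<lambda>z. cnj (F z) / (1 + z * cnj z)^2) \<xi>)"

definition isolated_umbilic_at0 :: "(complex \<Rightarrow> complex) \<Rightarrow> bool" where
  "isolated_umbilic_at0 F \<longleftrightarrow> wirt_dbar F 0 = 0 \<and>
     (\<exists>\<epsilon>>0. \<forall>\<xi>. 0 < norm \<xi> \<and> norm \<xi> < \<epsilon> \<longrightarrow> wirt_dbar F \<xi> \<noteq> 0)"

definition G_coeff :: "(nat \<Rightarrow> nat \<Rightarrow> complex) \<Rightarrow> nat \<Rightarrow> real \<Rightarrow> complex" where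
  "G_coeff A k \<theta> = (\<Sum>n=0..k. of_nat (k - n + 1) * A n (k - n + 1) * exp (2 * \<i> * of_nat n * of_real \<theta>))"

definition nondegenerate_order :: "(nat \<Rightarrow> nat \<Rightarrow> complex) \<Rightarrow> nat \<Rightarrow> bool" where
  "nondegenerate_order A N \<longleftrightarrow>
     (\<forall>k<N. \<forall>\<theta>. G_coeff A k \<theta> = 0) \<and> (\<forall>\<theta>. G_coeff A N \<theta> \<noteq> 0)"

definition P_poly :: "(nat \<Rightarrow> nat \<Rightarrow> complex) \<Rightarrow> nat \<Rightarrow> complex poly" where
  "P_poly A N = (\<Sum>n=0..N. monom (of_nat (N - n + 1) * A n (N - n + 1) / A N 1) n)"

definition Delta :: "(nat \<Rightarrow> complex) \<Rightarrow> nat \<Rightarrow> nat \<Rightarrow> complex" where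
  "Delta \<zeta> N k = (\<Sum>I\<in>{I. I \<subseteq> {1..N} \<and> card I = k}. \<Prod>i\<in>I. \<zeta> i) / of_nat (N choose k)"

end

theory Submission
  imports Defs "HOL-Analysis.Analysis" "HOL-Computational_Algebra.Polynomial"
begin

lemma circle_infinite: "infinite {w::complex. norm w = 1}"
proof
  assume fin: "finite {w::complex. norm w = 1}"
  have "{-1..1::real} \<subseteq> Re ` {w::complex. norm w = 1}"
  proof
    fix x :: real assume x: "x \<in> {-1..1}"
    have "x^2 \<le> 1" using x by (auto simp: abs_square_le_1)
    hence "norm (Complex x (sqrt (1 - x^2))) = 1"
      by (simp add: cmod_def)
    thus "x \<in> Re ` {w::complex. norm w = 1}"
      by (intro image_eqI[of _ _ "Complex x (sqrt (1 - x^2))"]) auto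
  qed
  hence "finite {-1..1::real}" using fin finite_subset by blast
  thus False using infinite_Icc[of "-1::real" 1] by simp
qed

lemma trig_poly_zero:
  fixes c :: "nat \<Rightarrow> complex"
  assumes h: "\<And>\<theta>::real. (\<Sum>n=0..k. c n * exp (2 * \<i> * of_nat n * of_real \<theta>)) = 0"
    and "j \<le> k"
  shows "c j = 0"
proof -
  define p where "p = (\<Sum>n=0..k. monom (c n) n)"
  have pe: "poly p w = (\<Sum>n=0..k. c n * w^n)" for w
    by (simp add: p_def poly_sum poly_monom)
  have roots: "poly p w = 0" if "norm w = 1" for w
  proof -
    have w0: "w \<noteq> 0" using that by auto
    have "w = exp (\<i> * Arg w)" using Arg_eq[OF w0] that by simp
    hence "w ^ n = exp (2 * \<i> * of_nat n * of_real (Arg w / 2))" for n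
      by (metis (no_types, lifting) exp_of_nat_mult mult.assoc mult.commute
          nonzero_mult_div_cancel_left of_real_divide of_real_numeral times_divide_eq_right zero_neq_numeral)
    thus ?thesis using h[of "Arg w / 2"] by (simp add: pe)
  qed
  have "p = 0"
  proof (rule ccontr)
    assume "p \<noteq> 0"
    hence "finite {w. poly p w = 0}" by (rule poly_roots_finite)
    moreover have "{w::complex. norm w = 1} \<subseteq> {w. poly p w = 0}" using roots by auto
    ultimately show False using circle_infinite finite_subset by blast
  qed
  hence "coeff p j = 0" by simp
  moreover have "coeff p j = c j"
    using assms(2) by (simp add: p_def coeff_sum coeff_monom)
  ultimately show ?thesis by simp
qed

definition esym :: "(nat \<Rightarrow> complex) \<Rightarrow> nat set \<Rightarrow> nat \<Rightarrow> complex" where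
  "esym \<zeta> S j = (\<Sum>I\<in>Pow S. if card I + j = card S then (-1)^card I * (\<Prod>i\<in>I. \<zeta> i) else 0)"

lemma coeff_prod_linear:
  fixes \<zeta> :: "nat \<Rightarrow> complex"
  assumes "finite S"
  shows "coeff (\<Prod>i\<in>S. [:- \<zeta> i, 1:]) j = esym \<zeta> S j"
  using assms
proof (induction S arbitrary: j rule: finite_induct)
  case empty
  then show ?case by (simp add: esym_def)
next
  case (insert x S)
  have "(\<Prod>i\<in>insert x S. [:- \<zeta> i, 1:]) = [:- \<zeta> x, 1:] * (\<Prod>i\<in>S. [:- \<zeta> i, 1:])"
    using insert by simp
  hence L: "coeff (\<Prod>i\<in>insert x S. [:- \<zeta> i, 1:]) j =
      - \<zeta> x * esym \<zeta> S j + (if j = 0 then 0 else esym \<zeta> S (j - 1))"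
    by (simp add: insert.IH coeff_pCons split: nat.split)
  have disj: "Pow S \<inter> insert x ` Pow S = {}" using insert by auto
  have inj: "inj_on (insert x) (Pow S)"
  proof (rule inj_onI)
    fix a b assume "a \<in> Pow S" "b \<in> Pow S" "insert x a = insert x b"
    thus "a = b" using insert(2) by (metis PowD insert_ident subsetD)
  qed
  have cardI: "card (insert x I) = Suc (card I)" if "I \<in> Pow S" for I
  proof -
    have "finite I" "x \<notin> I" using that insert finite_subset by auto
    thus ?thesis by simp
  qed
  have prodI: "(\<Prod>i\<in>insert x I. \<zeta> i) = \<zeta> x * (\<Prod>i\<in>I. \<zeta> i)" if "I \<in> Pow S" for I
  proof -
    have "finite I" "x \<notin> I" using that insert finite_subset by auto
    thus ?thesis by simp
  qed
  have cS: "card (insert x S) = Suc (card S)" using insert by simp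
  have "esym \<zeta> (insert x S) j =
     (\<Sum>I\<in>Pow S. if card I + j = Suc (card S) then (-1)^card I * (\<Prod>i\<in>I. \<zeta> i) else 0)
   + (\<Sum>I\<in>insert x ` Pow S. if card I + j = Suc (card S) then (-1)^card I * (\<Prod>i\<in>I. \<zeta> i) else 0)"
    unfolding esym_def Pow_insert cS using insert disj
    by (subst sum.union_disjoint) auto
  also have "(\<Sum>I\<in>insert x ` Pow S. if card I + j = Suc (card S) then (-1)^card I * (\<Prod>i\<in>I. \<zeta> i) else 0)
      = (\<Sum>I\<in>Pow S. if card I + j = card S then - \<zeta> x * ((-1)^card I * (\<Prod>i\<in>I. \<zeta> i)) else 0)"
    by (subst sum.reindex[OF inj]) (auto intro!: sum.cong simp: cardI prodI)
  also have "\<dots> = - \<zeta> x * esym \<zeta> S j"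
    by (simp add: esym_def sum_distrib_left if_distrib cong: if_cong)
  also have "(\<Sum>I\<in>Pow S. if card I + j = Suc (card S) then (-1)^card I * (\<Prod>i\<in>I. \<zeta> i) else 0)
      = (if j = 0 then 0 else esym \<zeta> S (j - 1))"
  proof (cases j)
    case 0
    have "card I \<le> card S" if "I \<in> Pow S" for I using that insert card_mono by auto
    then show ?thesis using 0 by (auto intro!: sum.neutral) (metis Suc_n_not_le_n)
  next
    case (Suc j')
    then show ?thesis by (simp add: esym_def)
  qed
  finally show ?case using L by simp
qed

lemma binom_step: "Suc k * (N choose Suc k) = (N - k) * (N choose k)"
  by (metis binomial_absorption binomial_absorb_comp)

lemma binom_step2: "(k+1) * (k+2) * (N choose (k+2)) = (N - k) * (N - k - 1) * (N choose k)"
proof -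
  have a: "Suc (Suc k) * (N choose Suc (Suc k)) = (N - Suc k) * (N choose Suc k)" by (rule binom_step)
  have b: "Suc k * (N choose Suc k) = (N - k) * (N choose k)" by (rule binom_step)
  have "(k+1) * (k+2) * (N choose (k+2)) = Suc k * (Suc (Suc k) * (N choose Suc (Suc k)))"
    by (metis add_2_eq_Suc' Suc_eq_plus1 mult.assoc)
  also have "\<dots> = Suc k * ((N - Suc k) * (N choose Suc k))" by (simp only: a)
  also have "\<dots> = (N - Suc k) * (Suc k * (N choose Suc k))" by (simp only: mult.left_commute)
  also have "\<dots> = (N - Suc k) * ((N - k) * (N choose k))" by (simp only: b)
  also have "\<dots> = (N - k) * (N - k - 1) * (N choose k)"
    by (metis diff_Suc_eq_diff_pred diff_diff_left Suc_eq_plus1 mult.assoc mult.commute)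
  finally show ?thesis .
qed

lemma Delta_coeff:
  fixes \<zeta> :: "nat \<Rightarrow> complex"
  assumes "k \<le> N"
  shows "coeff (\<Prod>i=1..N. [:- \<zeta> i, 1:]) (N - k) = (-1)^k * of_nat (N choose k) * Delta \<zeta> N k"
proof -
  have "coeff (\<Prod>i=1..N. [:- \<zeta> i, 1:]) (N - k) = esym \<zeta> {1..N} (N - k)"
    by (simp add: coeff_prod_linear)
  also have "\<dots> = (\<Sum>I\<in>Pow {1..N}. if card I = k then (-1)^k * (\<Prod>i\<in>I. \<zeta> i) else 0)"
    unfolding esym_def using assms by (intro sum.cong) auto
  also have "\<dots> = (\<Sum>I\<in>{I. I \<subseteq> {1..N} \<and> card I = k}. (-1)^k * (\<Prod>i\<in>I. \<zeta> i))"
    by (subst sum.inter_filter[symmetric]) (auto intro!: sum.cong)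
  also have "\<dots> = (-1)^k * of_nat (N choose k) * Delta \<zeta> N k"
  proof -
    have C: "of_nat (N choose k) \<noteq> (0::complex)" using assms by simp
    show ?thesis using C
      by (simp add: Delta_def sum_distrib_left[symmetric])
  qed
  finally show ?thesis .
qed

lemma P_poly_coeff:
  assumes "j \<le> N"
  shows "coeff (P_poly A N) j = of_nat (N - j + 1) * A j (N - j + 1) / A N 1"
  using assms by (simp add: P_poly_def coeff_sum coeff_monom)

lemma alg1:
  fixes X Nc Y m C2 s a b U :: complex
  assumes "X \<noteq> 0" "Nc \<noteq> 0" "Y \<noteq> 0" "m \<noteq> 0" "C2 \<noteq> 0"
  shows "s * (2 * X * a * (b * U / m)) / (Nc * Y * (2 * X / Nc) * C2) = s * (a * b * U) / (Y * m * C2)"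
  using assms by (simp add: field_simps)

lemma alg2:
  fixes q C' C Y p r t sg U :: complex
  assumes "q \<noteq> 0" "C' \<noteq> 0" "C \<noteq> 0" "Y \<noteq> 0" "p * q * C' = r * t * C"
  shows "sg * (t * r * U) / (Y * q * C') = sg * p * U / (Y * C)"
proof -
  have "sg * (t * r * U) / (Y * q * C') = sg * ((r * t * C) * U) / (Y * q * C' * C)"
    using assms by (simp add: field_simps)
  also have "\<dots> = sg * ((p * q * C') * U) / (Y * q * C' * C)" using assms(5) by simp
  also have "\<dots> = sg * p * U / (Y * C)" using assms by (simp add: field_simps)
  finally show ?thesis .
qed

lemma final_algebra:
  fixes A :: "nat \<Rightarrow> nat \<Rightarrow> complex" and \<zeta> :: "nat \<Rightarrow> complex" and N :: nat
  assumes N2: "N \<ge> 2" and AN: "A N 1 \<noteq> 0"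
    and P: "P_poly A N = (\<Prod>i=1..N. [:- \<zeta> i, 1:])"
    and F1: "N \<ge> 3 \<Longrightarrow> of_nat N * A N 1 = cnj (2 * A 2 (N - 1))"
    and F2: "\<And>n. 1 \<le> n \<Longrightarrow> n + 3 \<le> N \<Longrightarrow>
               of_nat (N - n) * A (N - n) (n + 1) = of_nat (n + 2) * cnj (A (n + 2) (N - n - 1))"
  shows "norm (Delta \<zeta> N (N - 2)) = 1 \<and>
         (\<forall>n. 1 \<le> n \<and> n \<le> (N - 1) div 2 - 1 \<longrightarrow>
              Delta \<zeta> N n = Delta \<zeta> N (N - 2) * cnj (Delta \<zeta> N (N - 2 - n)))"
proof -
  have DF: "Delta \<zeta> N k = (-1)^k * of_nat (k + 1) * A (N - k) (k + 1) / (A N 1 * of_nat (N choose k))"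
    if "k \<le> N" for k
  proof -
    have "coeff (P_poly A N) (N - k) = (-1)^k * of_nat (N choose k) * Delta \<zeta> N k"
      using Delta_coeff[OF that] P by simp
    moreover have "coeff (P_poly A N) (N - k) = of_nat (k + 1) * A (N - k) (k + 1) / A N 1"
      using P_poly_coeff[of "N - k" N A] that by simp
    moreover have "(N choose k) \<noteq> 0" using that by simp
    ultimately have e: "of_nat (k + 1) * A (N - k) (k + 1) = A N 1 * ((-1)^k * of_nat (N choose k) * Delta \<zeta> N k)"
      using AN by (simp add: field_simps)
    have s: "(-1::complex)^k * (-1)^k = 1" by (simp flip: power_add)
    have C: "of_nat (N choose k) \<noteq> (0::complex)" using that by simp
    have "(-1)^k * of_nat (k + 1) * A (N - k) (k + 1) = A N 1 * of_nat (N choose k) * (((-1)^k * (-1)^k) * Delta \<zeta> N k)"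
      by (subst mult.assoc, subst e) (simp add: algebra_simps)
    thus ?thesis using s AN C by (simp add: field_simps)
  qed
  define Y where "Y = A N 1"
  define X where "X = A 2 (N - 1)"
  have c2: "2 * (N choose 2) = N * (N - 1)"
    using binomial_absorption[of 1 N] by (simp add: numeral_2_eq_2)
  have D2: "Delta \<zeta> N (N - 2) = (-1)^(N - 2) * 2 * X / (of_nat N * Y)" if "N \<ge> 3"
  proof -
    have h1: "N - (N - 2) = 2" and h2: "N - 2 + 1 = N - 1" using that by auto
    have h3: "N choose (N - 2) = N choose 2" using that binomial_symmetric[of 2 N] by simp
    have e: "Delta \<zeta> N (N - 2) = (-1)^(N-2) * of_nat (N - 1) * X / (Y * of_nat (N choose 2))"
      using DF[of "N - 2"] unfolding h1 h2 h3 X_def Y_def by simp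
    have "of_nat (2 * (N choose 2)) = (of_nat (N * (N - 1)) :: complex)" using c2 by simp
    hence c2': "of_nat (N choose 2) = (of_nat N * of_nat (N - 1) / 2 :: complex)" by (simp add: field_simps mult.commute)
    have "N - 1 > 0" "N > 0" using that by auto
    hence nz: "of_nat (N - 1) \<noteq> (0::complex)" "of_nat N \<noteq> (0::complex)" by auto
    show ?thesis unfolding e c2' using nz AN by (simp add: Y_def field_simps)
  qed
  have F1': "of_nat N * Y = cnj (2 * X)" if "N \<ge> 3" using F1[OF that] by (simp add: X_def Y_def)
  have Xnz: "X \<noteq> 0" if "N \<ge> 3"
  proof
    assume "X = 0"
    hence "of_nat N * Y = 0" using F1'[OF that] by simp
    thus False using AN that by (simp add: Y_def)
  qed
  have claim1: "norm (Delta \<zeta> N (N - 2)) = 1"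
  proof (cases "N = 2")
    case True
    then show ?thesis using DF[of 0] AN by simp
  next
    case False
    hence N3: "N \<ge> 3" using N2 by simp
    have "Delta \<zeta> N (N - 2) = (-1)^(N - 2) * (2 * X) / cnj (2 * X)"
      using D2[OF N3] F1'[OF N3] by simp
    moreover have "norm (cnj (2 * X)) = norm (2 * X)" by (rule complex_mod_cnj)
    ultimately show ?thesis using Xnz[OF N3] by (simp add: norm_divide norm_mult norm_power)
  qed
  have claim2: "Delta \<zeta> N n = Delta \<zeta> N (N - 2) * cnj (Delta \<zeta> N (N - 2 - n))"
    if n1: "1 \<le> n" and n2: "n \<le> (N - 1) div 2 - 1" for n
  proof -
    have n3: "n + 3 \<le> N" using n1 n2 by linarith
    hence N3: "N \<ge> 3" by simp
    define U where "U = A (N - n) (n + 1)"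
    define V where "V = A (n + 2) (N - n - 1)"
    have F2': "of_nat (N - n) * U = of_nat (n + 2) * cnj V" using F2[OF n1 n3] by (simp add: U_def V_def)
    have Dn: "Delta \<zeta> N n = (-1)^n * of_nat (n + 1) * U / (Y * of_nat (N choose n))"
      using DF[of n] n3 by (simp add: U_def Y_def)
    have h1: "N - (N - 2 - n) = n + 2" and h2: "N - 2 - n + 1 = N - n - 1" using n3 by auto
    have h3: "N choose (N - 2 - n) = N choose (n + 2)" using n3 binomial_symmetric[of "n+2" N] by simp
    have Dm: "Delta \<zeta> N (N - 2 - n) = (-1)^(N - 2 - n) * of_nat (N - n - 1) * V / (Y * of_nat (N choose (n + 2)))"
      using DF[of "N - 2 - n"] unfolding h1 h2 h3 V_def Y_def by simp
    have sgn: "(-1::complex)^(N - 2) * (-1)^(N - 2 - n) = (-1)^n"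
    proof -
      have "(N - 2) + (N - 2 - n) = n + 2 * (N - 2 - n)" using n3 by simp
      hence "(-1::complex)^(N - 2) * (-1)^(N - 2 - n) = (-1)^n * ((-1)^2)^(N - 2 - n)"
        by (metis power_add power_mult)
      thus ?thesis by simp
    qed
    have cY: "cnj Y = 2 * X / of_nat N" using F1'[OF N3] N3
      by (metis complex_cnj_cnj complex_cnj_mult complex_cnj_of_nat nonzero_mult_div_cancel_left of_nat_eq_0_iff not_numeral_le_zero le_0_eq)
    have n2nz: "of_nat (n + 2) \<noteq> (0::complex)" by (metis add_eq_0_iff_both_eq_0 of_nat_eq_0_iff zero_neq_numeral)
    have cV: "cnj V = of_nat (N - n) * U / of_nat (n + 2)" unfolding F2' using n2nz by simp
    have b: "of_nat ((n+1) * (n+2) * (N choose (n+2))) = (of_nat ((N - n) * (N - n - 1) * (N choose n)) :: complex)"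
      using binom_step2[of n N] by simp
    have b': "of_nat (n+1) * of_nat (n+2) * of_nat (N choose (n+2)) = of_nat (N-n) * of_nat (N-n-1) * (of_nat (N choose n) :: complex)"
      by (simp only: of_nat_mult[symmetric] binom_step2)
    have nz: "of_nat (N choose n) \<noteq> (0::complex)" "of_nat (N choose (n+2)) \<noteq> (0::complex)"
      "of_nat N \<noteq> (0::complex)" "of_nat (n + 2) \<noteq> (0::complex)" using n3 n2nz by auto
    have "Delta \<zeta> N (N - 2) * cnj (Delta \<zeta> N (N - 2 - n)) =
       ((-1)^(N - 2) * (-1)^(N - 2 - n)) * (2 * X * of_nat (N - n - 1) * cnj V) / (of_nat N * Y * cnj Y * of_nat (N choose (n + 2)))"
      unfolding D2[OF N3] Dm by (simp add: field_simps)
    also have "\<dots> = (-1)^n * (of_nat (N - n - 1) * of_nat (N - n) * U) / (Y * of_nat (n + 2) * of_nat (N choose (n + 2)))"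
      unfolding sgn cY cV by (rule alg1) (use nz Xnz[OF N3] AN in \<open>auto simp: Y_def\<close>)
    also have "\<dots> = Delta \<zeta> N n"
      unfolding Dn by (rule alg2[OF _ _ _ _ b']) (use nz AN in \<open>auto simp: Y_def\<close>)
    finally show ?thesis by simp
  qed
  show ?thesis using claim1 claim2 by blast
qed

lemma powser_unique:
  fixes a :: "nat \<Rightarrow> complex"
  assumes \<rho>: "\<rho> > 0" and s: "\<And>r. 0 < r \<Longrightarrow> r < \<rho> \<Longrightarrow> (\<lambda>d. a d * of_real r ^ d) sums 0"
  shows "a k = 0"
proof (induction k rule: less_induct)
  case (less k)
  define b where "b j = a (j + k)" for j
  have sb: "(\<lambda>j. b j * of_real r ^ j) sums 0" if r: "0 < r" "r < \<rho>" for r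
  proof -
    have "(\<lambda>j. a (j + k) * of_real r ^ (j + k)) sums (0 - (\<Sum>i<k. a i * of_real r ^ i))"
      using sums_split_initial_segment[OF s[OF r]] .
    also have "(\<Sum>i<k. a i * of_real r ^ i) = 0" using less by simp
    finally have "(\<lambda>j. a (j + k) * of_real r ^ (j + k) / of_real r ^ k) sums (0 / of_real r ^ k)"
      by (intro sums_divide) simp
    moreover have "a (j + k) * of_real r ^ (j + k) / of_real r ^ k = b j * of_real r ^ j" for j
      using r by (simp add: b_def power_add)
    ultimately show ?thesis by simp
  qed
  define g where "g z = (\<Sum>j. b j * z ^ j)" for z :: complex
  have summ: "summable (\<lambda>j. b j * of_real (\<rho>/2) ^ j)"
    using sb[of "\<rho>/2"] \<rho> sums_summable by force
  have cont: "isCont g 0"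
    unfolding g_def by (rule isCont_powser[OF summ]) (use \<rho> in simp)
  have g0: "g 0 = a k" by (simp add: g_def b_def)
  have gr: "g (of_real r) = 0" if "0 < r" "r < \<rho>" for r
    using sb[OF that] unfolding g_def by (simp add: sums_iff)
  have lim1: "((\<lambda>r::real. g (of_real r)) \<longlongrightarrow> g 0) (at_right 0)"
  proof -
    have "isCont (\<lambda>r::real. g (of_real r)) 0"
      using isCont_o2[where f="of_real :: real \<Rightarrow> complex" and a=0 and g=g] cont by (simp add: continuous_intros)
    hence "((\<lambda>r::real. g (of_real r)) \<longlongrightarrow> g 0) (at 0)"
      by (simp add: isCont_def)
    thus ?thesis by (rule tendsto_within_subset) auto
  qed
  have ev: "eventually (\<lambda>r. g (of_real r) = 0) (at_right (0::real))"
    using eventually_at_right_real[OF \<rho>] by eventually_elim (auto intro: gr)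
  have lim2: "((\<lambda>r::real. g (of_real r)) \<longlongrightarrow> 0) (at_right 0)"
    by (rule tendsto_eventually[THEN tendsto_cong[THEN iffD1, rotated]]) (use ev in \<open>auto elim: eventually_mono\<close>)
  have "g 0 = 0" using tendsto_unique[OF _ lim1 lim2] by simp
  thus ?case using g0 by simp
qed

definition psok :: "(nat \<Rightarrow> nat \<Rightarrow> complex) \<Rightarrow> real \<Rightarrow> bool" where
  "psok C \<rho> \<longleftrightarrow> (\<forall>r. 0 \<le> r \<and> r < \<rho> \<longrightarrow> (\<lambda>(n,m). norm (C n m) * r^(n+m)) summable_on UNIV)"

definition Phi :: "(nat \<Rightarrow> nat \<Rightarrow> complex) \<Rightarrow> complex \<Rightarrow> complex" where
  "Phi C \<xi> = infsum (\<lambda>(n,m). C n m * \<xi>^n * cnj \<xi>^m) UNIV"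

lemma psok_summable:
  assumes "psok C \<rho>" "norm \<xi> < \<rho>"
  shows "(\<lambda>(n,m). C n m * \<xi>^n * cnj \<xi>^m) summable_on UNIV"
proof (rule abs_summable_summable)
  have "(\<lambda>(n,m). norm (C n m) * norm \<xi>^(n+m)) summable_on UNIV"
    using assms unfolding psok_def by auto
  moreover have "(\<lambda>(n,m). norm (C n m) * norm \<xi>^(n+m)) = (\<lambda>x. norm ((\<lambda>(n,m). C n m * \<xi>^n * cnj \<xi>^m) x))"
    by (auto simp: norm_mult norm_power power_add)
  ultimately show "(\<lambda>x. norm ((\<lambda>(n,m). C n m * \<xi>^n * cnj \<xi>^m) x)) summable_on UNIV" by simp
qed

lemma psok_has_sum:
  assumes "psok C \<rho>" "norm \<xi> < \<rho>"
  shows "((\<lambda>(n,m). C n m * \<xi>^n * cnj \<xi>^m) has_sum Phi C \<xi>) UNIV"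
  using psok_summable[OF assms] unfolding Phi_def by (simp add: has_sum_infsum)

lemma Phi_unique:
  assumes ok: "psok D \<rho>" and \<rho>: "\<rho> > 0" and z: "\<And>\<xi>. norm \<xi> < \<rho> \<Longrightarrow> Phi D \<xi> = 0"
  shows "D n m = 0"
proof -
  define T where "T \<theta> d = (\<Sum>j\<le>d. D j (d - j) * exp (\<i> * of_real \<theta>) ^ j * cnj (exp (\<i> * of_real \<theta>)) ^ (d - j))"
    for \<theta> :: real and d
  have bij: "bij_betw (\<lambda>(d,j). (j, d - j)) (Sigma UNIV (\<lambda>d. {..d})) (UNIV :: (nat \<times> nat) set)"
    by (rule bij_betwI[where g="\<lambda>(n,m). (n+m, n)"]) auto
  have Tz: "T \<theta> d = 0" for \<theta> d
  proof -
    define w where "w = exp (\<i> * of_real \<theta>)"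
    have nw: "norm w = 1" by (simp add: w_def)
    have "(\<lambda>d. T \<theta> d * of_real r ^ d) sums 0" if r: "0 < r" "r < \<rho>" for r
    proof -
      define \<xi> where "\<xi> = of_real r * w"
      have n\<xi>: "norm \<xi> < \<rho>" using r nw by (simp add: \<xi>_def norm_mult)
      define f where "f = (\<lambda>(n,m). D n m * \<xi>^n * cnj \<xi>^m)"
      have "(f has_sum 0) UNIV" using psok_has_sum[OF ok n\<xi>] z[OF n\<xi>] by (simp add: f_def)
      hence "((\<lambda>x. f ((\<lambda>(d,j). (j, d - j)) x)) has_sum 0) (Sigma UNIV (\<lambda>d. {..d}))"
        using has_sum_reindex_bij_betw[OF bij] by blast
      hence "((\<lambda>d. \<Sum>j\<le>d. f (j, d - j)) has_sum 0) UNIV"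
        by (rule has_sum_SigmaD) (auto intro: has_sum_finiteI)
      moreover have "(\<Sum>j\<le>d. f (j, d - j)) = T \<theta> d * of_real r ^ d" for d
      proof -
        have "f (j, d - j) = D j (d - j) * w ^ j * cnj w ^ (d - j) * of_real r ^ d" if "j \<le> d" for j
        proof -
          have "of_real r ^ j * of_real r ^ (d - j) = (of_real r ^ d :: complex)"
            using that by (simp flip: power_add)
          have "f (j, d - j) = D j (d - j) * (of_real r * w) ^ j * cnj (of_real r * w) ^ (d - j)"
            by (simp add: f_def \<xi>_def)
          also have "\<dots> = D j (d - j) * w ^ j * cnj w ^ (d - j) * (of_real r ^ j * of_real r ^ (d - j))"
            unfolding complex_cnj_mult complex_cnj_complex_of_real power_mult_distrib by algebra
          finally show ?thesis using \<open>of_real r ^ j * of_real r ^ (d - j) = (of_real r ^ d :: complex)\<close> by simp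
        qed
        hence "(\<Sum>j\<le>d. f (j, d - j)) = (\<Sum>j\<le>d. D j (d - j) * w ^ j * cnj w ^ (d - j) * of_real r ^ d)"
          by (intro sum.cong) auto
        thus ?thesis by (simp add: T_def w_def sum_distrib_right)
      qed
      ultimately show ?thesis by (simp add: has_sum_imp_sums)
    qed
    thus ?thesis by (intro powser_unique[OF \<rho>]) auto
  qed
  have "\<forall>\<theta>::real. (\<Sum>j=0..n+m. D j (n + m - j) * exp (2 * \<i> * of_nat j * of_real \<theta>)) = 0"
  proof
    fix \<theta> :: real
    have e: "exp (\<i> * of_real \<theta>) ^ j * cnj (exp (\<i> * of_real \<theta>)) ^ (d - j)
        = exp (- \<i> * of_nat d * of_real \<theta>) * exp (2 * \<i> * of_nat j * of_real \<theta>)" if "j \<le> d" for j d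
    proof -
      have "exp (\<i> * of_real \<theta>) ^ j * cnj (exp (\<i> * of_real \<theta>)) ^ (d - j)
          = exp (of_nat j * (\<i> * of_real \<theta>)) * exp (of_nat (d - j) * (- \<i> * of_real \<theta>))"
      proof -
        have a: "exp (\<i> * of_real \<theta>) ^ j = exp (of_nat j * (\<i> * of_real \<theta>))"
          by (rule exp_of_nat_mult[symmetric])
        have b: "cnj (exp (\<i> * of_real \<theta>)) = exp (- \<i> * of_real \<theta>)" by (simp add: exp_cnj)
        have c: "exp (- \<i> * of_real \<theta>) ^ (d - j) = exp (of_nat (d - j) * (- \<i> * of_real \<theta>))"
          by (rule exp_of_nat_mult[symmetric])
        show ?thesis unfolding a b c ..
      qed
      also have "\<dots> = exp (of_nat j * (\<i> * of_real \<theta>) + of_nat (d - j) * (- \<i> * of_real \<theta>))"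
        by (rule exp_add[symmetric])
      also have "of_nat j * (\<i> * of_real \<theta>) + of_nat (d - j) * (- \<i> * of_real \<theta>)
          = - \<i> * of_nat d * of_real \<theta> + 2 * \<i> * of_nat j * of_real \<theta>"
        using that by (simp add: of_nat_diff algebra_simps)
      also have "exp (- \<i> * of_nat d * of_real \<theta> + 2 * \<i> * of_nat j * of_real \<theta>) = exp (- \<i> * of_nat d * of_real \<theta>) * exp (2 * \<i> * of_nat j * of_real \<theta>)"
        by (rule exp_add)
      finally show ?thesis .
    qed
    have "0 = T \<theta> (n + m)" using Tz by simp
    also have "\<dots> = exp (- \<i> * of_nat (n+m) * of_real \<theta>) * (\<Sum>j\<le>n+m. D j (n + m - j) * exp (2 * \<i> * of_nat j * of_real \<theta>))"
      unfolding T_def sum_distrib_left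
    proof (intro sum.cong refl)
      fix j assume "j \<in> {..n+m}"
      hence "j \<le> n + m" by simp
      from e[OF this] show "D j (n + m - j) * exp (\<i> * of_real \<theta>) ^ j * cnj (exp (\<i> * of_real \<theta>)) ^ (n + m - j) =
         exp (- \<i> * of_nat (n + m) * of_real \<theta>) * (D j (n + m - j) * exp (2 * \<i> * of_nat j * of_real \<theta>))"
        by (metis mult.assoc mult.left_commute)
    qed
    finally show "(\<Sum>j=0..n+m. D j (n + m - j) * exp (2 * \<i> * of_nat j * of_real \<theta>)) = 0"
      by (simp add: atLeast0AtMost)
  qed
  hence "D n (n + m - n) = 0" by (intro trig_poly_zero[where k="n+m" and c="\<lambda>j. D j (n+m-j)"]) simp_all
  thus ?thesis by simp
qed

definition sh :: "nat \<Rightarrow> nat \<Rightarrow> (nat \<Rightarrow> nat \<Rightarrow> complex) \<Rightarrow> nat \<Rightarrow> nat \<Rightarrow> complex" where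
  "sh i j C n m = (if i \<le> n \<and> j \<le> m then C (n - i) (m - j) else 0)"

definition dz :: "(nat \<Rightarrow> nat \<Rightarrow> complex) \<Rightarrow> nat \<Rightarrow> nat \<Rightarrow> complex" where
  "dz C n m = of_nat (n + 1) * C (n + 1) m"

definition cs :: "(nat \<Rightarrow> nat \<Rightarrow> complex) \<Rightarrow> nat \<Rightarrow> nat \<Rightarrow> complex" where
  "cs C n m = cnj (C m n)"

definition dw :: "(nat \<Rightarrow> nat \<Rightarrow> complex) \<Rightarrow> nat \<Rightarrow> nat \<Rightarrow> complex" where
  "dw C n m = of_nat (m + 1) * C n (m + 1)"

lemma has_sum_shift_iff:
  fixes g :: "nat \<times> nat \<Rightarrow> 'a::{comm_monoid_add,topological_space}"
  shows "(g has_sum S) UNIV \<longleftrightarrow>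
         ((\<lambda>(n,m). if i \<le> n \<and> j \<le> m then g (n - i, m - j) else 0) has_sum S) UNIV"
proof -
  define h where "h = (\<lambda>(n::nat,m::nat). (n + i, m + j))"
  define g' where "g' = (\<lambda>(n,m). if i \<le> n \<and> j \<le> m then g (n - i, m - j) else 0)"
  have inj: "inj_on h UNIV" by (auto simp: h_def inj_on_def)
  have img: "h ` UNIV = {(n,m). i \<le> n \<and> j \<le> m}"
  proof safe
    fix n m assume "i \<le> n" "j \<le> m"
    thus "(n, m) \<in> range h" by (intro image_eqI[of _ _ "(n - i, m - j)"]) (auto simp: h_def)
  qed (auto simp: h_def)
  have "(g' has_sum S) (h ` UNIV) \<longleftrightarrow> ((g' \<circ> h) has_sum S) UNIV"
    by (rule has_sum_reindex[OF inj])
  moreover have "g' \<circ> h = g" by (auto simp: g'_def h_def fun_eq_iff)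
  moreover have "(g' has_sum S) (h ` UNIV) \<longleftrightarrow> (g' has_sum S) UNIV"
    by (rule has_sum_cong_neutral) (auto simp: img g'_def split: if_splits)
  ultimately show ?thesis by (simp add: g'_def)
qed

lemma pow_helper1:
  fixes r x :: real
  assumes "i \<le> n" "j \<le> m"
  shows "r^(i+j) * (x * r^(n-i+(m-j))) = x * r^(n+m)"
proof -
  have "i + j + (n - i + (m - j)) = n + m" using assms by simp
  thus ?thesis by (metis mult.left_commute power_add)
qed

lemma pow_helper2:
  fixes \<xi> c :: complex
  assumes "i \<le> n" "j \<le> m"
  shows "\<xi>^i * cnj \<xi>^j * (c * \<xi>^(n-i) * cnj \<xi>^(m-j)) = c * \<xi>^n * cnj \<xi>^m"
proof -
  have "\<xi>^n = \<xi>^i * \<xi>^(n-i)" "cnj \<xi>^m = cnj \<xi>^j * cnj \<xi>^(m-j)"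
    using assms by (simp_all flip: power_add)
  thus ?thesis by (simp add: mult_ac)
qed

lemma psok_sh:
  assumes "psok C \<rho>" shows "psok (sh i j C) \<rho>"
  unfolding psok_def
proof safe
  fix r :: real assume r: "0 \<le> r" "r < \<rho>"
  have "(\<lambda>(n,m). norm (C n m) * r^(n+m)) summable_on UNIV" using assms r unfolding psok_def by auto
  hence "(\<lambda>x. r^(i+j) * (\<lambda>(n,m). norm (C n m) * r^(n+m)) x) summable_on UNIV"
    by (rule summable_on_cmult_right)
  then obtain S where "((\<lambda>x. r^(i+j) * (\<lambda>(n,m). norm (C n m) * r^(n+m)) x) has_sum S) UNIV"
    unfolding summable_on_def by blast
  moreover define G where "G = (\<lambda>x. r^(i+j) * (\<lambda>(n,m). norm (C n m) * r^(n+m)) x)"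
  ultimately have "(G has_sum S) UNIV" by simp
  hence "((\<lambda>(n,m). if i \<le> n \<and> j \<le> m then G (n-i, m-j) else 0) has_sum S) UNIV"
    using has_sum_shift_iff[where g=G and i=i and j=j] by blast
  hence "((\<lambda>(n,m). if i \<le> n \<and> j \<le> m then r^(i+j) * (norm (C (n-i) (m-j)) * r^((n-i)+(m-j))) else 0) has_sum S) UNIV"
    by (simp only: G_def case_prod_conv)
  moreover have "(\<lambda>(n,m). if i \<le> n \<and> j \<le> m then r^(i+j) * (norm (C (n-i) (m-j)) * r^((n-i)+(m-j))) else 0)
      = (\<lambda>(n,m). norm (sh i j C n m) * r^(n+m))"
  proof (rule ext, clarify)
    fix n m
    show "(if i \<le> n \<and> j \<le> m then r^(i+j) * (norm (C (n-i) (m-j)) * r^((n-i)+(m-j))) else 0) = norm (sh i j C n m) * r^(n+m)"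
      using pow_helper1[of i n j m r "norm (C (n-i) (m-j))"] by (auto simp: sh_def)
  qed
  ultimately show "(\<lambda>(n,m). norm (sh i j C n m) * r^(n+m)) summable_on UNIV"
    unfolding summable_on_def by auto
qed

lemma Phi_sh:
  assumes "psok C \<rho>" "norm \<xi> < \<rho>"
  shows "Phi (sh i j C) \<xi> = \<xi>^i * cnj \<xi>^j * Phi C \<xi>"
proof -
  have "((\<lambda>x. \<xi>^i * cnj \<xi>^j * (\<lambda>(n,m). C n m * \<xi>^n * cnj \<xi>^m) x) has_sum (\<xi>^i * cnj \<xi>^j * Phi C \<xi>)) UNIV"
    by (rule has_sum_cmult_right[OF psok_has_sum[OF assms]])
  moreover define G where "G = (\<lambda>x. \<xi>^i * cnj \<xi>^j * (\<lambda>(n,m). C n m * \<xi>^n * cnj \<xi>^m) x)"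
  ultimately have "(G has_sum (\<xi>^i * cnj \<xi>^j * Phi C \<xi>)) UNIV" by simp
  hence "((\<lambda>(n,m). if i \<le> n \<and> j \<le> m then G (n-i, m-j) else 0) has_sum (\<xi>^i * cnj \<xi>^j * Phi C \<xi>)) UNIV"
    using has_sum_shift_iff[where g=G and i=i and j=j] by blast
  hence "((\<lambda>(n,m). if i \<le> n \<and> j \<le> m then \<xi>^i * cnj \<xi>^j * (C (n-i) (m-j) * \<xi>^(n-i) * cnj \<xi>^(m-j)) else 0)
           has_sum (\<xi>^i * cnj \<xi>^j * Phi C \<xi>)) UNIV"
    by (simp only: G_def case_prod_conv)
  moreover have "(\<lambda>(n,m). if i \<le> n \<and> j \<le> m then \<xi>^i * cnj \<xi>^j * (C (n-i) (m-j) * \<xi>^(n-i) * cnj \<xi>^(m-j)) else 0)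
      = (\<lambda>(n,m). sh i j C n m * \<xi>^n * cnj \<xi>^m)"
  proof (rule ext, clarify)
    fix n m
    show "(if i \<le> n \<and> j \<le> m then \<xi>^i * cnj \<xi>^j * (C (n-i) (m-j) * \<xi>^(n-i) * cnj \<xi>^(m-j)) else 0) = sh i j C n m * \<xi>^n * cnj \<xi>^m"
      using pow_helper2[of i n j m \<xi> "C (n-i) (m-j)"] by (auto simp: sh_def)
  qed
  ultimately have "((\<lambda>(n,m). sh i j C n m * \<xi>^n * cnj \<xi>^m) has_sum (\<xi>^i * cnj \<xi>^j * Phi C \<xi>)) UNIV"
    by simp
  thus ?thesis unfolding Phi_def by (rule infsumI)
qed

lemma psok_add:
  assumes "psok C \<rho>" "psok D \<rho>" shows "psok (\<lambda>n m. C n m + D n m) \<rho>"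
  unfolding psok_def
proof safe
  fix r :: real assume r: "0 \<le> r" "r < \<rho>"
  have "(\<lambda>x. (\<lambda>(n,m). norm (C n m) * r^(n+m)) x + (\<lambda>(n,m). norm (D n m) * r^(n+m)) x) summable_on UNIV"
    using assms r unfolding psok_def by (intro summable_on_add) auto
  thus "(\<lambda>(n,m). norm (C n m + D n m) * r^(n+m)) summable_on UNIV"
  proof (rule summable_on_comparison_test)
    fix x :: "nat \<times> nat"
    show "(case x of (n, m) \<Rightarrow> norm (C n m + D n m) * r ^ (n + m)) \<le>
          (case x of (n, m) \<Rightarrow> norm (C n m) * r ^ (n + m)) + (case x of (n, m) \<Rightarrow> norm (D n m) * r ^ (n + m))"
      using r by (cases x) (auto simp: distrib_right[symmetric] intro!: mult_right_mono norm_triangle_ineq)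
    show "0 \<le> (case x of (n, m) \<Rightarrow> norm (C n m + D n m) * r ^ (n + m))" using r by (cases x) auto
  qed
qed

lemma Phi_add:
  assumes "psok C \<rho>" "psok D \<rho>" "norm \<xi> < \<rho>"
  shows "Phi (\<lambda>n m. C n m + D n m) \<xi> = Phi C \<xi> + Phi D \<xi>"
proof -
  have "((\<lambda>x. (\<lambda>(n,m). C n m * \<xi>^n * cnj \<xi>^m) x + (\<lambda>(n,m). D n m * \<xi>^n * cnj \<xi>^m) x) has_sum (Phi C \<xi> + Phi D \<xi>)) UNIV"
    by (intro has_sum_add psok_has_sum[OF assms(1,3)] psok_has_sum[OF assms(2,3)])
  hence "((\<lambda>(n,m). (C n m + D n m) * \<xi>^n * cnj \<xi>^m) has_sum (Phi C \<xi> + Phi D \<xi>)) UNIV"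
    by (simp add: case_prod_unfold distrib_right)
  thus ?thesis unfolding Phi_def by (rule infsumI)
qed

lemma psok_scale:
  assumes "psok C \<rho>" shows "psok (\<lambda>n m. c * C n m) \<rho>"
  unfolding psok_def
proof safe
  fix r :: real assume r: "0 \<le> r" "r < \<rho>"
  have "(\<lambda>x. norm c * (\<lambda>(n,m). norm (C n m) * r^(n+m)) x) summable_on UNIV"
    using assms r unfolding psok_def by (intro summable_on_cmult_right) auto
  thus "(\<lambda>(n,m). norm (c * C n m) * r^(n+m)) summable_on UNIV"
    by (simp add: case_prod_unfold norm_mult mult.assoc)
qed

lemma Phi_scale:
  assumes "psok C \<rho>" "norm \<xi> < \<rho>"
  shows "Phi (\<lambda>n m. c * C n m) \<xi> = c * Phi C \<xi>"
proof -
  have "((\<lambda>x. c * (\<lambda>(n,m). C n m * \<xi>^n * cnj \<xi>^m) x) has_sum (c * Phi C \<xi>)) UNIV"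
    by (intro has_sum_cmult_right psok_has_sum[OF assms])
  hence "((\<lambda>(n,m). (c * C n m) * \<xi>^n * cnj \<xi>^m) has_sum (c * Phi C \<xi>)) UNIV"
    by (simp add: case_prod_unfold mult.assoc)
  thus ?thesis unfolding Phi_def by (rule infsumI)
qed

lemma summable_swap:
  fixes f :: "nat \<times> nat \<Rightarrow> 'a::{comm_monoid_add,topological_space}"
  assumes "(f has_sum S) UNIV"
  shows "((\<lambda>(x,y). f (y,x)) has_sum S) UNIV"
proof -
  have "(f has_sum S) (UNIV \<times> UNIV)" using assms by simp
  hence "((\<lambda>(x,y). f (y,x)) has_sum S) (UNIV \<times> UNIV)" by (rule iffD1[OF has_sum_swap])
  thus ?thesis by simp
qed

lemma psok_cs:
  assumes "psok C \<rho>" shows "psok (cs C) \<rho>"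
  unfolding psok_def
proof safe
  fix r :: real assume r: "0 \<le> r" "r < \<rho>"
  have "(\<lambda>(n,m). norm (C n m) * r^(n+m)) summable_on UNIV" using assms r unfolding psok_def by auto
  then obtain S where "((\<lambda>(n,m). norm (C n m) * r^(n+m)) has_sum S) UNIV" unfolding summable_on_def by blast
  hence "((\<lambda>(x,y). (\<lambda>(n,m). norm (C n m) * r^(n+m)) (y,x)) has_sum S) UNIV" by (rule summable_swap)
  moreover have "(\<lambda>(x,y). (\<lambda>(n,m). norm (C n m) * r^(n+m)) (y,x)) = (\<lambda>(n,m). norm (cs C n m) * r^(n+m))"
    by (auto simp: cs_def add.commute fun_eq_iff)
  ultimately show "(\<lambda>(n,m). norm (cs C n m) * r^(n+m)) summable_on UNIV"
    unfolding summable_on_def by auto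
qed

lemma Phi_cs:
  assumes "psok C \<rho>" "norm \<xi> < \<rho>"
  shows "Phi (cs C) \<xi> = cnj (Phi C \<xi>)"
proof -
  define f where "f = (\<lambda>p. cnj ((\<lambda>(n,m). C n m * \<xi>^n * cnj \<xi>^m) p))"
  have "(f has_sum cnj (Phi C \<xi>)) UNIV"
    using psok_has_sum[OF assms] unfolding f_def by (simp only: has_sum_cnj_iff)
  hence "((\<lambda>(x,y). f (y,x)) has_sum cnj (Phi C \<xi>)) UNIV" by (rule summable_swap)
  moreover have "(\<lambda>(x,y). f (y,x)) = (\<lambda>(n,m). cs C n m * \<xi>^n * cnj \<xi>^m)"
    by (auto simp: f_def cs_def fun_eq_iff)
  ultimately have "((\<lambda>(n,m). cs C n m * \<xi>^n * cnj \<xi>^m) has_sum cnj (Phi C \<xi>)) UNIV" by simp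
  thus ?thesis unfolding Phi_def by (rule infsumI)
qed

lemma growth:
  fixes r r' :: real
  assumes r: "0 \<le> r" "r < r'"
  shows "\<exists>K. \<forall>d. (real d + 1)^2 * r^d \<le> K * r'^d"
proof -
  define q where "q = r / r'"
  have r'0: "r' > 0" using r by simp
  have q: "0 \<le> q" "q < 1" using r r'0 by (auto simp: q_def field_simps)
  define x where "x = sqrt q"
  have x: "norm x < 1" "x^2 = q" "0 \<le> x" using q by (auto simp: x_def)
  have "(\<lambda>d. real d * x^d + x^d) \<longlonglongrightarrow> 0 + 0"
    by (intro tendsto_add powser_times_n_limit_0 LIMSEQ_power_zero x)
  hence "(\<lambda>d. (real d * x^d + x^d)^2) \<longlonglongrightarrow> 0"
    using tendsto_power[of _ 0 sequentially 2] by force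
  moreover have "(real d * x^d + x^d)^2 = (real d + 1)^2 * q^d" for d
    by (simp add: power2_eq_square algebra_simps x(2)[symmetric] power_mult_distrib flip: power_add power_mult)
  ultimately have "(\<lambda>d. (real d + 1)^2 * q^d) \<longlonglongrightarrow> 0" by simp
  hence "Bseq (\<lambda>d. (real d + 1)^2 * q^d)" using convergent_imp_Bseq convergentI by blast
  then obtain K where K: "\<And>d. norm ((real d + 1)^2 * q^d) \<le> K" unfolding Bseq_def by blast
  have "(real d + 1)^2 * r^d \<le> K * r'^d" for d
  proof -
    have "r^d = q^d * r'^d" using r'0 by (simp add: q_def power_divide)
    hence "(real d + 1)^2 * r^d = ((real d + 1)^2 * q^d) * r'^d" by simp
    also have "\<dots> \<le> K * r'^d" using K[of d] q r'0
      by (intro mult_right_mono) auto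
    finally show ?thesis .
  qed
  thus ?thesis by blast
qed

lemma psok_poly:
  assumes ok: "psok C \<rho>" and s: "0 \<le> s" "s < \<rho>"
  shows "(\<lambda>(n,m). norm (C n m) * (real (n+m) + 1)^2 * s^(n+m)) summable_on UNIV"
proof -
  define r' where "r' = (s + \<rho>) / 2"
  have r': "s < r'" "0 \<le> r'" "r' < \<rho>" using s by (auto simp: r'_def)
  obtain K where K: "\<And>d. (real d + 1)^2 * s^d \<le> K * r'^d" using growth[OF s(1) r'(1)] by blast
  have "(\<lambda>p. K * (\<lambda>(n,m). norm (C n m) * r'^(n+m)) p) summable_on UNIV"
    using ok r' unfolding psok_def by (intro summable_on_cmult_right) auto
  thus ?thesis
  proof (rule summable_on_comparison_test)
    fix p :: "nat \<times> nat"
    obtain n m where p: "p = (n,m)" by (cases p)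
    have "norm (C n m) * ((real (n+m) + 1)^2 * s^(n+m)) \<le> norm (C n m) * (K * r'^(n+m))"
      by (intro mult_left_mono K) auto
    thus "(\<lambda>(n,m). norm (C n m) * (real (n+m) + 1)^2 * s^(n+m)) p \<le> K * (\<lambda>(n,m). norm (C n m) * r'^(n+m)) p"
      by (simp add: p mult_ac)
    show "0 \<le> (\<lambda>(n,m). norm (C n m) * (real (n+m) + 1)^2 * s^(n+m)) p" using s by (simp add: p)
  qed
qed

lemma psok_dz:
  assumes ok: "psok C \<rho>" shows "psok (dz C) \<rho>"
  unfolding psok_def
proof safe
  fix r :: real assume r: "0 \<le> r" "r < \<rho>"
  define r' where "r' = (r + \<rho>) / 2"
  have r': "r < r'" "0 < r'" "r' < \<rho>" using r by (auto simp: r'_def)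
  obtain K where K: "\<And>d. (real d + 1)^2 * r^d \<le> K * r'^d" using growth[OF r(1) r'(1)] by blast
  define G where "G = (\<lambda>(n,m). norm (C n m) * r'^(n+m))"
  have "G summable_on UNIV" using ok r' unfolding psok_def G_def by auto
  hence "G summable_on ((\<lambda>(n,m). (n+1,m)) ` UNIV)" by (rule summable_on_subset) auto
  hence "(G \<circ> (\<lambda>(n,m). (n+1,m))) summable_on UNIV"
    by (subst (asm) summable_on_reindex) (auto simp: inj_on_def)
  hence "(\<lambda>p. K / r' * (G \<circ> (\<lambda>(n,m). (n+1,m))) p) summable_on UNIV"
    by (rule summable_on_cmult_right)
  thus "(\<lambda>(n,m). norm (dz C n m) * r^(n+m)) summable_on UNIV"
  proof (rule summable_on_comparison_test)
    fix p :: "nat \<times> nat"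
    obtain n m where p: "p = (n,m)" by (cases p)
    have "real (n+1) * r^(n+m) \<le> (real (n+m) + 1)^2 * r^(n+m)"
    proof (intro mult_right_mono)
      have "real (n+1) \<le> real (n+m) + 1" by simp
      also have "\<dots> \<le> (real (n+m) + 1)^2" by (simp add: power2_eq_square)
      finally show "real (n+1) \<le> (real (n+m) + 1)^2" .
    qed (use r in simp)
    also have "\<dots> \<le> K * r'^(n+m)" by (rule K)
    also have "\<dots> = K / r' * r'^(n+1+m)" using r' by (simp add: field_simps)
    finally have "norm (C (n+1) m) * (real (n+1) * r^(n+m)) \<le> norm (C (n+1) m) * (K / r' * r'^(n+1+m))"
      by (intro mult_left_mono) auto
    thus "(\<lambda>(n,m). norm (dz C n m) * r^(n+m)) p \<le> K / r' * (G \<circ> (\<lambda>(n,m). (n+1,m))) p"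
      unfolding p G_def dz_def norm_mult norm_of_nat using r' by (simp add: mult_ac)
    show "0 \<le> (\<lambda>(n,m). norm (dz C n m) * r^(n+m)) p" using r by (simp add: p)
  qed
qed

lemma dw_cs: "dw C = cs (dz (cs C))"
  by (simp add: dw_def cs_def dz_def fun_eq_iff)

lemma psok_dw: "psok C \<rho> \<Longrightarrow> psok (dw C) \<rho>"
  unfolding dw_cs by (intro psok_cs psok_dz)

lemma E_step:
  fixes x y :: complex
  shows "x^(Suc n) - y^(Suc n) - of_nat (Suc n) * y^n * (x - y)
       = x * (x^n - y^n - of_nat n * y^(n-1) * (x - y)) + of_nat n * y^(n-1) * (x - y)^2"
proof (cases n)
  case 0 then show ?thesis by simp
next
  case (Suc k)
  then show ?thesis by (simp add: algebra_simps power2_eq_square)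
qed

lemma pow_le_s:
  fixes y :: complex and s :: real
  assumes "norm y \<le> s" "1 \<le> n"
  shows "s * norm y ^ (n - 1) \<le> s ^ n"
proof -
  have "norm y ^ (n - 1) \<le> s ^ (n - 1)" using assms by (intro power_mono) auto
  moreover have "0 \<le> s" using assms(1) norm_ge_zero[of y] by linarith
  ultimately have "s * norm y ^ (n - 1) \<le> s * s ^ (n - 1)"
    by (intro mult_left_mono) auto
  also have "s * s ^ (n - 1) = s ^ n" using assms(2) by (cases n) auto
  finally show ?thesis .
qed

lemma E_bound:
  fixes x y :: complex and s :: real
  assumes x: "norm x \<le> s" and y: "norm y \<le> s" and s: "0 < s"
  shows "s^2 * norm (x^n - y^n - of_nat n * y^(n-1) * (x - y)) \<le> real n ^ 2 * s^n * norm (x - y)^2"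
proof (induction n)
  case 0 then show ?case by simp
next
  case (Suc n)
  define E where "E = x^n - y^n - of_nat n * y^(n-1) * (x - y)"
  have "s^2 * norm (x^(Suc n) - y^(Suc n) - of_nat (Suc n) * y^(Suc n - 1) * (x - y))
      = s^2 * norm (x * E + of_nat n * y^(n-1) * (x - y)^2)"
    using E_step[of x n y] by (simp add: E_def)
  also have "\<dots> \<le> s^2 * (norm x * norm E + real n * norm y ^ (n-1) * norm (x - y)^2)"
    using s by (intro mult_left_mono) (auto intro!: order_trans[OF norm_triangle_ineq] simp: norm_mult norm_power)
  also have "\<dots> = norm x * (s^2 * norm E) + real n * (s * (s * norm y ^ (n-1))) * norm (x - y)^2"
    by (simp add: algebra_simps power2_eq_square)
  also have "\<dots> \<le> s * (real n ^ 2 * s^n * norm (x - y)^2) + real n * (s * s^n) * norm (x - y)^2"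
  proof (rule add_mono)
    show "norm x * (s^2 * norm E) \<le> s * (real n ^ 2 * s^n * norm (x - y)^2)"
      using Suc.IH x s by (rule_tac mult_mono) (auto simp: E_def)
    show "real n * (s * (s * norm y ^ (n-1))) * norm (x - y)^2 \<le> real n * (s * s^n) * norm (x - y)^2"
    proof (cases "n = 0")
      case False
      hence "s * (s * norm y ^ (n-1)) \<le> s * s^n" using pow_le_s[OF y, of n] s by (intro mult_left_mono) auto
      thus ?thesis by (rule mult_right_mono[OF mult_left_mono]) auto
    qed simp
  qed
  also have "\<dots> = (real n ^ 2 + real n) * s^(Suc n) * norm (x - y)^2" by (simp add: algebra_simps)
  also have "\<dots> \<le> real (Suc n) ^ 2 * s^(Suc n) * norm (x - y)^2"
    using s by (intro mult_right_mono) (auto simp: power2_eq_square algebra_simps)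
  finally show ?case .
qed

lemma D_bound:
  fixes x y :: complex and s :: real
  assumes x: "norm x \<le> s" and y: "norm y \<le> s" and s: "0 < s"
  shows "s * norm (x^n - y^n) \<le> real n * s^n * norm (x - y)"
proof (induction n)
  case 0 then show ?case by simp
next
  case (Suc n)
  have "s * norm (x^(Suc n) - y^(Suc n)) = s * norm (x * (x^n - y^n) + (x - y) * y^n)"
    by (simp add: algebra_simps)
  also have "\<dots> \<le> s * (norm x * norm (x^n - y^n) + norm (x - y) * norm y ^ n)"
    using s by (intro mult_left_mono) (auto intro!: order_trans[OF norm_triangle_ineq] simp: norm_mult norm_power)
  also have "\<dots> = norm x * (s * norm (x^n - y^n)) + s * norm y ^ n * norm (x - y)" by (simp add: algebra_simps)
  also have "\<dots> \<le> s * (real n * s^n * norm (x - y)) + s * s ^ n * norm (x - y)"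
  proof (rule add_mono)
    show "norm x * (s * norm (x^n - y^n)) \<le> s * (real n * s^n * norm (x - y))"
      using Suc.IH x s by (rule_tac mult_mono) auto
    show "s * norm y ^ n * norm (x - y) \<le> s * s ^ n * norm (x - y)"
      using y s by (intro mult_right_mono mult_left_mono power_mono) auto
  qed
  also have "\<dots> = real (Suc n) * s^(Suc n) * norm (x - y)" by (simp add: algebra_simps)
  finally show ?case .
qed

lemma mono_est:
  fixes x y :: complex and s :: real
  assumes x: "norm x \<le> s" and y: "norm y \<le> s" and s: "0 < s"
  shows "s^2 * norm (x^n * cnj x^m - y^n * cnj y^m - (of_nat n * y^(n-1) * cnj y^m * (x - y) + of_nat m * y^n * cnj y^(m-1) * cnj (x - y)))
         \<le> (real (n+m) + 1)^2 * s^(n+m) * norm (x - y)^2"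
proof -
  define X where "X = cnj x"
  define Y where "Y = cnj y"
  define d where "d = norm (x - y)"
  have X: "norm X \<le> s" and Y: "norm Y \<le> s" using x y by (simp_all add: X_def Y_def)
  have dXY: "norm (X - Y) = d" by (simp add: X_def Y_def d_def flip: complex_cnj_diff)
  define En where "En = x^n - y^n - of_nat n * y^(n-1) * (x - y)"
  define Em where "Em = X^m - Y^m - of_nat m * Y^(m-1) * (X - Y)"
  have id: "x^n * cnj x^m - y^n * cnj y^m - (of_nat n * y^(n-1) * cnj y^m * (x - y) + of_nat m * y^n * cnj y^(m-1) * cnj (x - y))
      = En * X^m + y^n * Em + of_nat n * y^(n-1) * (x - y) * (X^m - Y^m)"
    unfolding En_def Em_def X_def Y_def complex_cnj_diff by (simp add: algebra_simps)
  have b1: "s^2 * norm (En * X^m) \<le> real n^2 * s^n * d^2 * s^m"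
  proof -
    have "s^2 * norm (En * X^m) = (s^2 * norm En) * norm X ^ m" by (simp add: norm_mult norm_power)
    also have "\<dots> \<le> (real n^2 * s^n * d^2) * s^m"
      using E_bound[OF x y s, of n] X s by (rule_tac mult_mono) (auto intro: power_mono simp: En_def d_def)
    finally show ?thesis .
  qed
  have b2: "s^2 * norm (y^n * Em) \<le> s^n * (real m^2 * s^m * d^2)"
  proof -
    have "s^2 * norm (y^n * Em) = norm y ^ n * (s^2 * norm Em)" by (simp add: norm_mult norm_power)
    also have "\<dots> \<le> s^n * (real m^2 * s^m * d^2)"
      using E_bound[OF X Y s, of m] y s dXY by (rule_tac mult_mono) (auto intro: power_mono simp: Em_def)
    finally show ?thesis .
  qed
  have b3: "s^2 * norm (of_nat n * y^(n-1) * (x - y) * (X^m - Y^m)) \<le> real n * s^n * d * (real m * s^m * d)"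
  proof (cases "n = 0")
    case False
    have "s^2 * norm (of_nat n * y^(n-1) * (x - y) * (X^m - Y^m)) = real n * (s * norm y ^ (n-1)) * d * (s * norm (X^m - Y^m))"
      by (simp add: norm_mult norm_power d_def power2_eq_square)
    also have "\<dots> \<le> real n * s^n * d * (real m * s^m * d)"
    proof (rule mult_mono)
      show "real n * (s * norm y ^ (n-1)) * d \<le> real n * s^n * d"
        using pow_le_s[OF y, of n] False by (intro mult_right_mono mult_left_mono) (auto simp: d_def)
      show "s * norm (X^m - Y^m) \<le> real m * s^m * d" using D_bound[OF X Y s, of m] dXY by simp
    qed (use s in \<open>auto simp: d_def\<close>)
    finally show ?thesis .
  qed simp
  have "s^2 * norm (En * X^m + y^n * Em + of_nat n * y^(n-1) * (x - y) * (X^m - Y^m))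
      \<le> s^2 * norm (En * X^m) + s^2 * norm (y^n * Em) + s^2 * norm (of_nat n * y^(n-1) * (x - y) * (X^m - Y^m))"
    using s by (simp add: distrib_left[symmetric] norm_triangle_le norm_triangle_ineq add_mono)
  also have "\<dots> \<le> real n^2 * s^n * d^2 * s^m + s^n * (real m^2 * s^m * d^2) + real n * s^n * d * (real m * s^m * d)"
    using b1 b2 b3 by linarith
  also have "\<dots> = (real n^2 + real m^2 + real n * real m) * s^(n+m) * d^2"
    by (simp add: algebra_simps power_add power2_eq_square)
  also have "\<dots> \<le> (real (n+m) + 1)^2 * s^(n+m) * d^2"
    using s by (intro mult_right_mono) (auto simp: power2_eq_square algebra_simps)
  finally show ?thesis unfolding id d_def .
qed

lemma bl_test: "bounded_linear (\<lambda>h::complex. a * h + b * cnj h)"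
  by (intro bounded_linear_add bounded_linear_mult_right bounded_linear_compose[OF bounded_linear_mult_right bounded_linear_cnj])

lemma Phi_deriv:
  assumes ok: "psok C \<rho>" and \<xi>: "norm \<xi> < \<rho>"
  shows "(Phi C has_derivative (\<lambda>h. Phi (dz C) \<xi> * h + Phi (dw C) \<xi> * cnj h)) (at \<xi>)"
proof -
  define s where "s = (norm \<xi> + \<rho>) / 2"
  have n0: "0 \<le> norm \<xi>" by simp
  have r0: "0 < norm \<xi> + \<rho>" using \<xi> n0 by linarith
  have s: "0 < s" "norm \<xi> < s" "s < \<rho>" using \<xi> r0 unfolding s_def by auto
  define a where "a = Phi (dz C) \<xi>"
  define b where "b = Phi (dw C) \<xi>"
  have Ha: "((\<lambda>(n,m). of_nat n * C n m * \<xi>^(n-1) * cnj \<xi>^m) has_sum a) UNIV"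
  proof -
    define G where "G = (\<lambda>(n,m). dz C n m * \<xi>^n * cnj \<xi>^m)"
    have "(G has_sum a) UNIV" using psok_has_sum[OF psok_dz[OF ok] \<xi>] by (simp add: G_def a_def)
    hence "((\<lambda>(n,m). if 1 \<le> n \<and> 0 \<le> m then G (n - 1, m - 0) else 0) has_sum a) UNIV"
      using has_sum_shift_iff[where g=G and i=1 and j=0] by blast
    moreover have "(\<lambda>(n,m). if 1 \<le> n \<and> 0 \<le> m then G (n - 1, m - 0) else 0)
        = (\<lambda>(n,m). of_nat n * C n m * \<xi>^(n-1) * cnj \<xi>^m)"
      by (auto simp: G_def dz_def fun_eq_iff)
    ultimately show ?thesis by simp
  qed
  have Hb: "((\<lambda>(n,m). of_nat m * C n m * \<xi>^n * cnj \<xi>^(m-1)) has_sum b) UNIV"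
  proof -
    define G where "G = (\<lambda>(n,m). dw C n m * \<xi>^n * cnj \<xi>^m)"
    have "(G has_sum b) UNIV" using psok_has_sum[OF psok_dw[OF ok] \<xi>] by (simp add: G_def b_def)
    hence "((\<lambda>(n,m). if 0 \<le> n \<and> 1 \<le> m then G (n - 0, m - 1) else 0) has_sum b) UNIV"
      using has_sum_shift_iff[where g=G and i=0 and j=1] by blast
    moreover have "(\<lambda>(n,m). if 0 \<le> n \<and> 1 \<le> m then G (n - 0, m - 1) else 0)
        = (\<lambda>(n,m). of_nat m * C n m * \<xi>^n * cnj \<xi>^(m-1))"
      by (auto simp: G_def dw_def fun_eq_iff)
    ultimately show ?thesis by simp
  qed
  define W where "W = (\<lambda>(n,m). norm (C n m) * (real (n+m) + 1)^2 * s^(n+m))"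
  define M where "M = infsum W UNIV"
  have HW: "(W has_sum M) UNIV"
    using psok_poly[OF ok _ s(3)] s(1) unfolding W_def M_def by (simp add: has_sum_infsum)
  have key: "norm (Phi C (\<xi> + h) - Phi C \<xi> - (a * h + b * cnj h)) \<le> M / s^2 * norm h ^ 2"
    if h: "norm h < s - norm \<xi>" for h
  proof -
    define x where "x = \<xi> + h"
    have nx: "norm x < s" using h norm_triangle_ineq[of \<xi> h] by (simp add: x_def)
    have H1: "((\<lambda>(n,m). C n m * x^n * cnj x^m) has_sum Phi C x) UNIV"
      using psok_has_sum[OF ok] nx s by simp
    have H0: "((\<lambda>(n,m). C n m * \<xi>^n * cnj \<xi>^m) has_sum Phi C \<xi>) UNIV"
      using psok_has_sum[OF ok \<xi>] .
    define R where "R = (\<lambda>(n,m). C n m * (x^n * cnj x^m - \<xi>^n * cnj \<xi>^m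
          - (of_nat n * \<xi>^(n-1) * cnj \<xi>^m * (x - \<xi>) + of_nat m * \<xi>^n * cnj \<xi>^(m-1) * cnj (x - \<xi>))))"
    have "((\<lambda>p. (\<lambda>(n,m). C n m * x^n * cnj x^m) p + ((-1) * (\<lambda>(n,m). C n m * \<xi>^n * cnj \<xi>^m) p
             + ((- h) * (\<lambda>(n,m). of_nat n * C n m * \<xi>^(n-1) * cnj \<xi>^m) p
             + (- cnj h) * (\<lambda>(n,m). of_nat m * C n m * \<xi>^n * cnj \<xi>^(m-1)) p)))
          has_sum (Phi C x + ((-1) * Phi C \<xi> + ((- h) * a + (- cnj h) * b)))) UNIV"
      by (intro has_sum_add has_sum_cmult_right H1 H0 Ha Hb)
    moreover have "(\<lambda>p. (\<lambda>(n,m). C n m * x^n * cnj x^m) p + ((-1) * (\<lambda>(n,m). C n m * \<xi>^n * cnj \<xi>^m) p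
             + ((- h) * (\<lambda>(n,m). of_nat n * C n m * \<xi>^(n-1) * cnj \<xi>^m) p
             + (- cnj h) * (\<lambda>(n,m). of_nat m * C n m * \<xi>^n * cnj \<xi>^(m-1)) p))) = R"
      by (auto simp: R_def x_def fun_eq_iff algebra_simps)
    ultimately have HR: "(R has_sum (Phi C (\<xi> + h) - Phi C \<xi> - (a * h + b * cnj h))) UNIV"
      by (simp add: x_def algebra_simps)
    have HW': "((\<lambda>p. W p * (norm h ^ 2 / s^2)) has_sum (M * (norm h ^ 2 / s^2))) UNIV"
      by (rule has_sum_cmult_left[OF HW])
    have "norm (Phi C (\<xi> + h) - Phi C \<xi> - (a * h + b * cnj h)) \<le> M * (norm h ^ 2 / s^2)"
    proof (rule norm_infsum_le[OF HR HW'])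
      fix p :: "nat \<times> nat"
      obtain n m where p: "p = (n,m)" by (cases p)
      have e: "s^2 * norm (x^n * cnj x^m - \<xi>^n * cnj \<xi>^m
          - (of_nat n * \<xi>^(n-1) * cnj \<xi>^m * (x - \<xi>) + of_nat m * \<xi>^n * cnj \<xi>^(m-1) * cnj (x - \<xi>)))
          \<le> (real (n+m) + 1)^2 * s^(n+m) * norm (x - \<xi>)^2"
        by (rule mono_est) (use nx s in auto)
      have "norm (R p) = norm (C n m) * norm (x^n * cnj x^m - \<xi>^n * cnj \<xi>^m
          - (of_nat n * \<xi>^(n-1) * cnj \<xi>^m * (x - \<xi>) + of_nat m * \<xi>^n * cnj \<xi>^(m-1) * cnj (x - \<xi>)))"
        by (simp add: R_def p norm_mult)
      also have "\<dots> \<le> norm (C n m) * ((real (n+m) + 1)^2 * s^(n+m) * norm h ^ 2 / s^2)"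
        using e s by (intro mult_left_mono) (auto simp: x_def field_simps)
      also have "\<dots> = W p * (norm h ^ 2 / s^2)" by (simp add: W_def p)
      finally show "norm (R p) \<le> W p * (norm h ^ 2 / s^2)" .
    qed
    thus ?thesis by simp
  qed
  show ?thesis
    unfolding has_derivative_at
  proof (intro conjI)
    show "bounded_linear (\<lambda>h. Phi (dz C) \<xi> * h + Phi (dw C) \<xi> * cnj h)" by (rule bl_test)
    show "(\<lambda>h. norm (Phi C (\<xi> + h) - Phi C \<xi> - (Phi (dz C) \<xi> * h + Phi (dw C) \<xi> * cnj h)) / norm h) \<midarrow>0\<rightarrow> 0"
    proof (rule Lim_null_comparison)
      show "((\<lambda>h. M / s^2 * norm h) \<longlongrightarrow> 0) (at 0)"
        using tendsto_mult[OF tendsto_const tendsto_norm[OF tendsto_ident_at], of "M / s^2" 0 UNIV] by simp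
      have "eventually (\<lambda>h. h \<noteq> 0 \<and> norm h < s - norm \<xi>) (at (0::complex))"
        unfolding eventually_at using s by (intro exI[of _ "s - norm \<xi>"]) (auto simp: dist_norm)
      thus "eventually (\<lambda>h. norm (norm (Phi C (\<xi> + h) - Phi C \<xi> - (Phi (dz C) \<xi> * h + Phi (dw C) \<xi> * cnj h)) / norm h) \<le> M / s^2 * norm h) (at 0)"
      proof eventually_elim
        case (elim h)
        hence "norm (Phi C (\<xi> + h) - Phi C \<xi> - (a * h + b * cnj h)) / norm h \<le> M / s^2 * norm h ^ 2 / norm h"
          using key[of h] by (intro divide_right_mono) auto
        also have "\<dots> = M / s^2 * norm h" using elim by (simp add: power2_eq_square)
        finally show ?case by (simp add: a_def b_def)
      qed
    qed
  qed
qed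

lemma wirt_from_deriv:
  assumes "(f has_derivative (\<lambda>h. \<alpha> * h + \<beta> * cnj h)) (at z)"
  shows "wirt_d f z = \<alpha>" "wirt_dbar f z = \<beta>"
proof -
  have fd: "frechet_derivative f (at z) = (\<lambda>h. \<alpha> * h + \<beta> * cnj h)"
    using frechet_derivative_at[OF assms] by simp
  show "wirt_d f z = \<alpha>" unfolding wirt_d_def fd by (simp add: algebra_simps)
  show "wirt_dbar f z = \<beta>" unfolding wirt_dbar_def fd by (simp add: algebra_simps)
qed

lemma U_nz: "1 + \<xi> * cnj \<xi> \<noteq> 0"
proof -
  have "\<xi> * cnj \<xi> = of_real (norm \<xi> ^ 2)" by (rule complex_norm_square[symmetric])
  hence "1 + \<xi> * cnj \<xi> = of_real (1 + norm \<xi> ^ 2)" by simp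
  moreover have "1 + norm \<xi> ^ 2 > 0" by (simp add: add_pos_nonneg)
  ultimately show ?thesis by (metis of_real_eq_0_iff less_irrefl)
qed

lemma cnj_U: "cnj (1 + \<xi> * cnj \<xi>) = 1 + \<xi> * cnj \<xi>"
  by (simp add: mult.commute)

lemma quot_deriv:
  assumes F: "(F has_derivative (\<lambda>h. a * h + b * cnj h)) (at \<xi>)"
  defines "U \<equiv> 1 + \<xi> * cnj \<xi>"
  shows "((\<lambda>z. F z / (1 + z * cnj z)^2) has_derivative
           (\<lambda>h. (a / U^2 - 2 * F \<xi> * cnj \<xi> / U^3) * h + (b / U^2 - 2 * F \<xi> * \<xi> / U^3) * cnj h)) (at \<xi>)"
proof -
  have c: "(cnj has_derivative cnj) (at \<xi>)" by (rule bounded_linear_imp_has_derivative[OF bounded_linear_cnj])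
  have u: "((\<lambda>z. 1 + z * cnj z) has_derivative (\<lambda>h. 0 + (\<xi> * cnj h + h * cnj \<xi>))) (at \<xi>)"
    by (intro has_derivative_add has_derivative_const has_derivative_mult has_derivative_ident c)
  have u2: "((\<lambda>z. (1 + z * cnj z)^2) has_derivative (\<lambda>h. of_nat 2 * (0 + (\<xi> * cnj h + h * cnj \<xi>)) * (1 + \<xi> * cnj \<xi>)^(2 - 1))) (at \<xi>)"
    by (rule has_derivative_power[OF u])
  have nz: "(1 + \<xi> * cnj \<xi>)^2 \<noteq> 0" using U_nz by simp
  have d: "((\<lambda>z. F z / (1 + z * cnj z)^2) has_derivative
      (\<lambda>h. ((a * h + b * cnj h) * (1 + \<xi> * cnj \<xi>)^2 - F \<xi> * (of_nat 2 * (0 + (\<xi> * cnj h + h * cnj \<xi>)) * (1 + \<xi> * cnj \<xi>)^(2 - 1)))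
             / ((1 + \<xi> * cnj \<xi>)^2 * (1 + \<xi> * cnj \<xi>)^2))) (at \<xi>)"
    by (rule has_derivative_divide'[OF F u2 nz])
  have U0: "U \<noteq> 0" using U_nz by (simp add: U_def)
  have "(\<lambda>h. ((a * h + b * cnj h) * (1 + \<xi> * cnj \<xi>)^2 - F \<xi> * (of_nat 2 * (0 + (\<xi> * cnj h + h * cnj \<xi>)) * (1 + \<xi> * cnj \<xi>)^(2 - 1)))
             / ((1 + \<xi> * cnj \<xi>)^2 * (1 + \<xi> * cnj \<xi>)^2))
      = (\<lambda>h. (a / U^2 - 2 * F \<xi> * cnj \<xi> / U^3) * h + (b / U^2 - 2 * F \<xi> * \<xi> / U^3) * cnj h)"
    unfolding U_def[symmetric] using U0 by (intro ext) (simp add: field_simps power2_eq_square power3_eq_cube)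
  with d show ?thesis by simp
qed

definition cc :: "(nat \<Rightarrow> nat \<Rightarrow> complex) \<Rightarrow> nat \<Rightarrow> nat \<Rightarrow> complex" where
  "cc A a b = of_nat (a+1) * A (a+1) b + (if 1 \<le> b then (of_nat a - 2) * A a (b-1) else 0)"

lemma psr_psok:
  assumes psr: "power_series_rep A F \<rho>"
  shows "psok A \<rho>" "\<rho> > 0" "\<And>\<xi>. norm \<xi> < \<rho> \<Longrightarrow> F \<xi> = Phi A \<xi>"
proof -
  show "\<rho> > 0" using psr by (simp add: power_series_rep_def)
  show "F \<xi> = Phi A \<xi>" if "norm \<xi> < \<rho>" for \<xi>
  proof -
    have "((\<lambda>(n, m). A n m * \<xi> ^ n * cnj \<xi> ^ m) has_sum F \<xi>) UNIV"
      using psr that by (simp add: power_series_rep_def)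
    thus ?thesis unfolding Phi_def by (simp add: infsumI)
  qed
  show "psok A \<rho>"
    unfolding psok_def
  proof safe
    fix r :: real assume r: "0 \<le> r" "r < \<rho>"
    have "of_real r \<in> ball (0::complex) \<rho>" using r by simp
    hence "((\<lambda>(n, m). A n m * of_real r ^ n * cnj (of_real r) ^ m) has_sum F (of_real r)) UNIV"
      using psr unfolding power_series_rep_def by blast
    hence "(\<lambda>(n, m). A n m * of_real r ^ n * cnj (of_real r) ^ m) summable_on UNIV"
      by (rule has_sum_imp_summable)
    hence "(\<lambda>p. norm ((\<lambda>(n, m). A n m * of_real r ^ n * cnj (of_real r) ^ m) p)) summable_on UNIV"
      using summable_on_iff_abs_summable_on_complex by blast
    moreover have "(\<lambda>p. norm ((\<lambda>(n, m). A n m * of_real r ^ n * cnj (of_real r) ^ m) p)) = (\<lambda>(n,m). norm (A n m) * r^(n+m))"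
      using r by (auto simp: fun_eq_iff norm_mult norm_power power_add)
    ultimately show "(\<lambda>(n,m). norm (A n m) * r^(n+m)) summable_on UNIV" by simp
  qed
qed

lemma reality_coeffs:
  assumes psr: "power_series_rep A F \<rho>" and rc: "reality_condition F \<rho>"
  shows "cc A a b = cnj (cc A b a)"
proof -
  have ok: "psok A \<rho>" and \<rho>: "\<rho> > 0" and FP: "\<And>\<xi>. norm \<xi> < \<rho> \<Longrightarrow> F \<xi> = Phi A \<xi>"
    using psr_psok[OF psr] by auto
  define c where "c = (\<lambda>n m. dz A n m + sh 1 1 (dz A) n m + (-2) * sh 0 1 A n m)"
  have okc: "psok c \<rho>" unfolding c_def
    by (intro psok_add psok_scale psok_sh psok_dz ok)
  have okd: "psok (\<lambda>n m. c n m + (-1) * cs c n m) \<rho>"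
    by (intro psok_add psok_scale psok_cs okc)
  have Z: "Phi (\<lambda>n m. c n m + (-1) * cs c n m) \<xi> = 0" if \<xi>: "norm \<xi> < \<rho>" for \<xi>
  proof -
    define a where "a = Phi (dz A) \<xi>"
    define b where "b = Phi (dw A) \<xi>"
    define U where "U = 1 + \<xi> * cnj \<xi>"
    have U0: "U \<noteq> 0" unfolding U_def by (rule U_nz)
    have dP: "(Phi A has_derivative (\<lambda>h. a * h + b * cnj h)) (at \<xi>)"
      unfolding a_def b_def by (rule Phi_deriv[OF ok \<xi>])
    have dF: "(F has_derivative (\<lambda>h. a * h + b * cnj h)) (at \<xi>)"
      by (rule has_derivative_transform_within_open[OF dP, of "ball 0 \<rho>"]) (use \<xi> FP in auto)
    have dcF0: "((\<lambda>z. cnj (F z)) has_derivative (\<lambda>h. cnj (a * h + b * cnj h))) (at \<xi>)"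
      by (rule bounded_linear.has_derivative[OF bounded_linear_cnj dF])
    have dcF: "((\<lambda>z. cnj (F z)) has_derivative (\<lambda>h. cnj b * h + cnj a * cnj h)) (at \<xi>)"
      using dcF0 by (simp add: algebra_simps)
    have w1: "wirt_d (\<lambda>z. F z / (1 + z * cnj z)^2) \<xi> = a / U^2 - 2 * F \<xi> * cnj \<xi> / U^3"
      using wirt_from_deriv(1)[OF quot_deriv[OF dF]] by (simp add: U_def)
    have w2: "wirt_dbar (\<lambda>z. cnj (F z) / (1 + z * cnj z)^2) \<xi> = cnj a / U^2 - 2 * cnj (F \<xi>) * \<xi> / U^3"
      using wirt_from_deriv(2)[OF quot_deriv[OF dcF]] by (simp add: U_def)
    have "a / U^2 - 2 * F \<xi> * cnj \<xi> / U^3 = cnj a / U^2 - 2 * cnj (F \<xi>) * \<xi> / U^3"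
      using rc \<xi> w1 w2 unfolding reality_condition_def by auto
    hence B: "a * U - 2 * cnj \<xi> * F \<xi> = cnj a * U - 2 * \<xi> * cnj (F \<xi>)"
      using U0 by (simp add: field_simps power2_eq_square power3_eq_cube)
    have okdz: "psok (dz A) \<rho>" by (rule psok_dz[OF ok])
    have Pc: "Phi c \<xi> = a * U - 2 * cnj \<xi> * F \<xi>"
    proof -
      have e1: "Phi c \<xi> = Phi (\<lambda>n m. dz A n m + sh 1 1 (dz A) n m) \<xi> + Phi (\<lambda>n m. (-2) * sh 0 1 A n m) \<xi>"
        unfolding c_def by (rule Phi_add[OF psok_add[OF okdz psok_sh[OF okdz]] psok_scale[OF psok_sh[OF ok]] \<xi>])
      have e2: "Phi (\<lambda>n m. dz A n m + sh 1 1 (dz A) n m) \<xi> = Phi (dz A) \<xi> + Phi (sh 1 1 (dz A)) \<xi>"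
        by (rule Phi_add[OF okdz psok_sh[OF okdz] \<xi>])
      have e3: "Phi (\<lambda>n m. (-2) * sh 0 1 A n m) \<xi> = (-2) * Phi (sh 0 1 A) \<xi>"
        by (rule Phi_scale[OF psok_sh[OF ok] \<xi>])
      have "Phi c \<xi> = Phi (dz A) \<xi> + Phi (sh 1 1 (dz A)) \<xi> + (-2) * Phi (sh 0 1 A) \<xi>"
        unfolding e1 e2 e3 ..
      also have "\<dots> = a * U - 2 * cnj \<xi> * F \<xi>"
        by (simp add: Phi_sh[OF okdz \<xi>] Phi_sh[OF ok \<xi>] FP[OF \<xi>] a_def U_def algebra_simps)
      finally show ?thesis .
    qed
    have "Phi (cs c) \<xi> = cnj (Phi c \<xi>)" by (rule Phi_cs[OF okc \<xi>])
    also have "\<dots> = Phi c \<xi>" unfolding Pc using B by (simp add: U_def mult.commute)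
    finally have "Phi (cs c) \<xi> = Phi c \<xi>" .
    moreover have "Phi (\<lambda>n m. c n m + (-1) * cs c n m) \<xi> = Phi c \<xi> + Phi (\<lambda>n m. (-1) * cs c n m) \<xi>"
      by (rule Phi_add[OF okc psok_scale[OF psok_cs[OF okc]] \<xi>])
    moreover have "Phi (\<lambda>n m. (-1) * cs c n m) \<xi> = (-1) * Phi (cs c) \<xi>"
      by (rule Phi_scale[OF psok_cs[OF okc] \<xi>])
    ultimately show ?thesis by simp
  qed
  have "c a b + (-1) * cs c a b = 0" by (rule Phi_unique[OF okd \<rho> Z])
  hence "c a b = cnj (c b a)" by (simp add: cs_def)
  moreover have "c x y = cc A x y" for x y
    by (cases "x = 0"; cases "y = 0") (auto simp: c_def cc_def dz_def sh_def algebra_simps)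
  ultimately show ?thesis by simp
qed

lemma nondeg_zero:
  assumes nd: "nondegenerate_order A N" and m: "1 \<le> m" and nm: "n + m \<le> N"
  shows "A n m = 0"
proof -
  define k where "k = n + m - 1"
  have k: "k < N" "n \<le> k" "k - n + 1 = m" using m nm by (auto simp: k_def)
  have "\<forall>\<theta>. G_coeff A k \<theta> = 0" using nd k unfolding nondegenerate_order_def by blast
  hence h: "\<And>\<theta>::real. (\<Sum>j=0..k. of_nat (k - j + 1) * A j (k - j + 1) * exp (2 * \<i> * of_nat j * of_real \<theta>)) = 0"
    unfolding G_coeff_def by blast
  have "of_nat (k - n + 1) * A n (k - n + 1) = 0" by (rule trig_poly_zero[OF h k(2)])
  hence "A n (k - n + 1) = 0" by (metis mult_eq_0_iff of_nat_neq_0 Suc_eq_plus1)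
  thus ?thesis using k by simp
qed

lemma F1_fact:
  assumes cc: "\<And>a b. cc A a b = cnj (cc A b a)" and nd: "nondegenerate_order A N" and N3: "N \<ge> 3"
  shows "of_nat N * A N 1 = cnj (2 * A 2 (N - 1))"
proof -
  have z1: "A 1 (N - 2) = 0" using nondeg_zero[OF nd, of "N - 2" 1] N3 by simp
  have z2: "(of_nat (N - 1) - 2) * A (N - 1) 0 = 0"
  proof (cases "N = 3")
    case True then show ?thesis by simp
  next
    case False
    hence N4: "N \<ge> 4" using N3 by simp
    have z3: "A 0 (N - 3) = 0" using nondeg_zero[OF nd, of "N - 3" 0] N4 by simp
    have "cc A (N - 2) 0 = cnj (cc A 0 (N - 2))" by (rule cc)
    moreover have "cc A (N - 2) 0 = of_nat (N - 1) * A (N - 1) 0"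
      using N4 by (simp add: cc_def Suc_diff_Suc numeral_2_eq_2)
    moreover have "cc A 0 (N - 2) = 0"
    proof -
      have "N - 2 - 1 = N - 3" by simp
      thus ?thesis using N4 z1 z3 by (simp add: cc_def)
    qed
    ultimately have "of_nat (N - 1) * A (N - 1) 0 = 0" by simp
    hence "A (N - 1) 0 = 0" using N4 by simp
    thus ?thesis by simp
  qed
  have "cc A (N - 1) 1 = cnj (cc A 1 (N - 1))" by (rule cc)
  moreover have "cc A (N - 1) 1 = of_nat N * A N 1"
  proof -
    have "N - 1 + 1 = N" using N3 by simp
    hence "cc A (N - 1) 1 = of_nat N * A N 1 + (of_nat (N - 1) - 2) * A (N - 1) 0"
      unfolding cc_def by simp
    thus ?thesis using z2 by simp
  qed
  moreover have "cc A 1 (N - 1) = 2 * A 2 (N - 1)"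
  proof -
    have "N - 1 - 1 = N - 2" "1 \<le> N - 1" using N3 by auto
    thus ?thesis using z1 by (simp add: cc_def numeral_2_eq_2)
  qed
  ultimately show ?thesis by simp
qed

lemma F2_fact:
  assumes cc: "\<And>a b. cc A a b = cnj (cc A b a)" and nd: "nondegenerate_order A N"
    and n1: "1 \<le> n" and n3: "n + 3 \<le> N"
  shows "of_nat (N - n) * A (N - n) (n + 1) = of_nat (n + 2) * cnj (A (n + 2) (N - n - 1))"
proof -
  have z1: "A (N - n - 1) n = 0" using nondeg_zero[OF nd, of n "N - n - 1"] n1 n3 by simp
  have z2: "A (n + 1) (N - n - 2) = 0" using nondeg_zero[OF nd, of "N - n - 2" "n + 1"] n1 n3 by simp
  have "cc A (N - n - 1) (n + 1) = cnj (cc A (n + 1) (N - n - 1))" by (rule cc)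
  moreover have "cc A (N - n - 1) (n + 1) = of_nat (N - n) * A (N - n) (n + 1)"
  proof -
    have "N - n - 1 + 1 = N - n" using n3 by simp
    thus ?thesis using z1 by (simp add: cc_def)
  qed
  moreover have "cc A (n + 1) (N - n - 1) = of_nat (n + 2) * A (n + 2) (N - n - 1)"
  proof -
    have "N - n - 1 - 1 = N - n - 2" "1 \<le> N - n - 1" using n3 by auto
    thus ?thesis using z2 by (simp add: cc_def)
  qed
  ultimately show ?thesis by simp
qed

theorem mainTheorem5:
  fixes A :: "nat \<Rightarrow> nat \<Rightarrow> complex" and F :: "complex \<Rightarrow> complex"
    and \<rho> :: real and N :: nat and \<zeta> :: "nat \<Rightarrow> complex"
  assumes "power_series_rep A F \<rho>"
    and "reality_condition F \<rho>"
    and "isolated_umbilic_at0 F"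
    and "N \<ge> 2"
    and "nondegenerate_order A N"
    and "A N 1 \<noteq> 0"
    and "P_poly A N = (\<Prod>i=1..N. [:- \<zeta> i, 1:])"
  shows "norm (Delta \<zeta> N (N - 2)) = 1 \<and>
         (\<forall>n. 1 \<le> n \<and> n \<le> (N - 1) div 2 - 1 \<longrightarrow>
              Delta \<zeta> N n = Delta \<zeta> N (N - 2) * cnj (Delta \<zeta> N (N - 2 - n)))"
proof -
  have cc: "\<And>a b. cc A a b = cnj (cc A b a)" using reality_coeffs[OF assms(1,2)] by blast
  show ?thesis
    by (rule final_algebra[OF assms(4,6,7)])
       (use F1_fact[OF cc assms(5)] F2_fact[OF cc assms(5)] in auto)
qed

end
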